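(* Let $D$ be a digraph with $\chi(D)>\omega$. Then both $\vec H_{\omega,\omega}$ and $\overleftarrow{H}_{\omega,\omega}$ embed into $D$ (as not necessarily induced subdigraphs).
   Context: A digraph is a pair $D=(V,E)$ with $E\subseteq V^2$ such that $uv\in E$ implies $vu\notin E$. The dichromatic number $\chi(D)$ is the minimal number of acyclic vertex sets (sets inducing no directed cycle) covering $V(D)$. $\vec H_{\omega,\omega}$ is the digraph on $\omega\times 2$ whose arcs are $(k,0)(\ell,1)$ for all $k\leq\ell<\omega$; $\overleftarrow{H}_{\omega,\omega}$ is the digraph on $\omega\times2$ whose arcs are $(\ell,1)(k,0)$ for all $k\leq\ell<\omega$. *)

theory Defs
  imports Main "HOL-Library.Countable_Set"
begin

definition digraph :: "'a set \<Rightarrow> ('a \<times> 'a) set \<Rightarrow> bool" where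
  "digraph V E \<longleftrightarrow> E \<subseteq> V \<times> V \<and> (\<forall>u v. (u, v) \<in> E \<longrightarrow> (v, u) \<notin> E)"

definition acyclic_set :: "('a \<times> 'a) set \<Rightarrow> 'a set \<Rightarrow> bool" where
  "acyclic_set E A \<longleftrightarrow> acyclic (E \<inter> (A \<times> A))"

definition dichromatic_le_omega :: "'a set \<Rightarrow> ('a \<times> 'a) set \<Rightarrow> bool" where
  "dichromatic_le_omega V E \<longleftrightarrow>
     (\<exists>\<C>. countable \<C> \<and> (\<forall>A\<in>\<C>. A \<subseteq> V \<and> acyclic_set E A) \<and> V \<subseteq> \<Union>\<C>)"

text \<open>Vertex set omega x 2 is modelled as nat \<times> bool, with False = 0 and True = 1.\<close>
definition H_right :: "((nat \<times> bool) \<times> (nat \<times> bool)) set" where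
  "H_right = {((k, False), (l, True)) | k l. k \<le> l}"

definition H_left :: "((nat \<times> bool) \<times> (nat \<times> bool)) set" where
  "H_left = {((l, True), (k, False)) | k l. k \<le> l}"

definition embeds :: "('b \<times> 'b) set \<Rightarrow> 'a set \<Rightarrow> ('a \<times> 'a) set \<Rightarrow> bool" where
  "embeds F V E \<longleftrightarrow> (\<exists>f. inj f \<and> range f \<subseteq> V \<and> (\<forall>(x, y) \<in> F. (f x, f y) \<in> E))"

end

theory Submission
  imports Defs "HOL-Library.Countable_Set_Type"
begin
unbundle cardinal_syntax


lemma chain_ub:
  assumes "\<forall>X\<in>C. \<forall>Y\<in>C. X \<subseteq> Y \<or> Y \<subseteq> X" "X \<in> C" "Y \<in> C"
  shows "\<exists>U\<in>C. X \<subseteq> U \<and> Y \<subseteq> U"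
proof (cases "X \<subseteq> Y")
  case True then show ?thesis using assms(3) by blast
next
  case False then have "Y \<subseteq> X" using assms by blast
  then show ?thesis using assms(2) by blast
qed

lemma trancl_chain_union:
  assumes ch: "\<forall>X\<in>C. \<forall>Y\<in>C. X \<subseteq> Y \<or> Y \<subseteq> X"
    and xy: "(x, y) \<in> (E \<inter> (\<Union>C \<times> \<Union>C))\<^sup>+"
  shows "\<exists>X\<in>C. (x, y) \<in> (E \<inter> (X \<times> X))\<^sup>+"
  using xy
proof (induction rule: trancl_induct)
  case (base y)
  from base obtain X Y where "X \<in> C" "Y \<in> C" "x \<in> X" "y \<in> Y" "(x,y) \<in> E" by blast
  then obtain U where "U \<in> C" "X \<subseteq> U" "Y \<subseteq> U" using chain_ub[OF ch] by meson
  then have "(x,y) \<in> E \<inter> (U \<times> U)" using \<open>x \<in> X\<close> \<open>y \<in> Y\<close> \<open>(x,y) \<in> E\<close> by blast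
  then show ?case using \<open>U \<in> C\<close> by (intro bexI r_into_trancl)
next
  case (step y z)
  from step.IH obtain X where X: "X \<in> C" "(x, y) \<in> (E \<inter> (X \<times> X))\<^sup>+" by blast
  from step.hyps(2) obtain Y Z where "Y \<in> C" "Z \<in> C" "y \<in> Y" "z \<in> Z" "(y,z) \<in> E" by blast
  obtain U1 where U1: "U1 \<in> C" "X \<subseteq> U1" "Y \<subseteq> U1" using chain_ub[OF ch X(1) \<open>Y \<in> C\<close>] by blast
  obtain U where U: "U \<in> C" "U1 \<subseteq> U" "Z \<subseteq> U" using chain_ub[OF ch U1(1) \<open>Z \<in> C\<close>] by blast
  from U U1 have U: "U \<in> C" "X \<subseteq> U" "Y \<subseteq> U" "Z \<subseteq> U" by auto
  have "(x, y) \<in> (E \<inter> (U \<times> U))\<^sup>+"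
    by (rule trancl_mono[OF X(2)]) (use U in blast)
  moreover have "(y, z) \<in> E \<inter> (U \<times> U)" using U \<open>y \<in> Y\<close> \<open>z \<in> Z\<close> \<open>(y,z) \<in> E\<close> by blast
  ultimately have "(x, z) \<in> (E \<inter> (U \<times> U))\<^sup>+" by (rule trancl.trancl_into_trancl)
  then show ?case using U(1) by (intro bexI)
qed

lemma acyclic_chain_union:
  assumes ch: "\<forall>X\<in>C. \<forall>Y\<in>C. X \<subseteq> Y \<or> Y \<subseteq> X"
    and ac: "\<forall>X\<in>C. acyclic (E \<inter> (X \<times> X))"
  shows "acyclic (E \<inter> (\<Union>C \<times> \<Union>C))"
  unfolding acyclic_def using trancl_chain_union[OF ch] ac unfolding acyclic_def by blast

lemma LB: 
  assumes no: "\<And>u y. u \<in> A \<Longrightarrow> y \<in> B \<Longrightarrow> (u, y) \<notin> E"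
  shows "(x, y) \<in> (E \<inter> ((A \<union> B) \<times> (A \<union> B)))\<^sup>+ \<Longrightarrow> y \<in> B \<Longrightarrow> x \<in> B \<and> (x, y) \<in> (E \<inter> (B \<times> B))\<^sup>+"
  proof (induction rule: trancl_induct)
    case (base y)
    then have xy: "(x,y) \<in> E" "x \<in> A \<union> B" by auto
    then have "x \<in> B" using no base(2) by blast
    then show ?case using xy base(2) by blast
  next
    case (step y z)
    then have yz: "(y,z) \<in> E" "y \<in> A \<union> B" by auto
    then have "y \<in> B" using no step(4) by blast
    then have "x \<in> B" "(x, y) \<in> (E \<inter> (B \<times> B))\<^sup>+" using step(3) by blast+
    moreover have "(y, z) \<in> E \<inter> (B \<times> B)" using yz \<open>y \<in> B\<close> step(4) by blast
    ultimately show ?case by (meson trancl.trancl_into_trancl)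
  qed
lemma LA: 
  assumes no: "\<And>u y. u \<in> A \<Longrightarrow> y \<in> B \<Longrightarrow> (u, y) \<notin> E"
  shows "(x, y) \<in> (E \<inter> ((A \<union> B) \<times> (A \<union> B)))\<^sup>+ \<Longrightarrow> x \<in> A \<Longrightarrow> y \<in> A \<and> (x, y) \<in> (E \<inter> (A \<times> A))\<^sup>+"
  proof (induction rule: trancl_induct)
    case (base y)
    then have xy: "(x,y) \<in> E" "y \<in> A \<union> B" by auto
    then have "y \<in> A" using no base(2) by blast
    then show ?case using xy base(2) by blast
  next
    case (step y z)
    then have yz: "(y,z) \<in> E" "z \<in> A \<union> B" and "y \<in> A" "(x, y) \<in> (E \<inter> (A \<times> A))\<^sup>+" by blast+
    then have "z \<in> A" using no by blast
    moreover have "(y, z) \<in> E \<inter> (A \<times> A)" using yz \<open>y \<in> A\<close> \<open>z \<in> A\<close> by blast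
    ultimately show ?case using \<open>(x, y) \<in> (E \<inter> (A \<times> A))\<^sup>+\<close> by (meson trancl.trancl_into_trancl)
  qed

lemma acyclic_join:
  assumes a: "acyclic (E \<inter> (A \<times> A))" and b: "acyclic (E \<inter> (B \<times> B))"
    and no: "\<And>u y. u \<in> A \<Longrightarrow> y \<in> B \<Longrightarrow> (u, y) \<notin> E"
  shows "acyclic (E \<inter> ((A \<union> B) \<times> (A \<union> B)))"
  unfolding acyclic_def
proof (intro allI notI)
  fix x assume x: "(x, x) \<in> (E \<inter> ((A \<union> B) \<times> (A \<union> B)))\<^sup>+"
  have "x \<in> A \<union> B" using trancl_subset_Sigma[of "E \<inter> ((A \<union> B) \<times> (A \<union> B))" "A \<union> B"] x by blast
  then show False
  proof
    assume "x \<in> A" then show False using LA[OF no x] a unfolding acyclic_def by blast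
  next
    assume "x \<in> B" then show False using LB[OF no x] b unfolding acyclic_def by blast
  qed
qed




definition CN :: "'a set \<Rightarrow> ('a \<times> 'a) set \<Rightarrow> 'a set \<Rightarrow> 'a set" where
  "CN V E F = {w \<in> V. \<forall>u\<in>F. (u, w) \<in> E}"

lemma embed_from_set:
  assumes AV: "A \<subseteq> V" and infA: "infinite A"
    and good: "\<And>F. F \<subseteq> A \<Longrightarrow> finite F \<Longrightarrow> F \<noteq> {} \<Longrightarrow> infinite (CN V E F)"
  shows "embeds H_right V E"
proof -
  define nxt where "nxt = (\<lambda>p::'a list \<times> 'a list.
     let a = (SOME a. a \<in> A \<and> a \<notin> set (fst p) \<and> a \<notin> set (snd p));
         b = (SOME b. b \<in> CN V E (insert a (set (fst p))) \<and> b \<notin> insert a (set (fst p)) \<and> b \<notin> set (snd p))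
     in (a # fst p, b # snd p))"
  define st where "st = (\<lambda>n. (nxt ^^ n) ([], []))"
  define aa where "aa = (\<lambda>n. SOME a. a \<in> A \<and> a \<notin> set (fst (st n)) \<and> a \<notin> set (snd (st n)))"
  define bb where "bb = (\<lambda>n. SOME b. b \<in> CN V E (insert (aa n) (set (fst (st n)))) \<and> b \<notin> insert (aa n) (set (fst (st n))) \<and> b \<notin> set (snd (st n)))"
  have stS: "st (Suc n) = (aa n # fst (st n), bb n # snd (st n))" for n
    by (simp add: st_def nxt_def aa_def bb_def Let_def)
  have sets: "set (fst (st n)) = aa ` {..<n} \<and> set (snd (st n)) = bb ` {..<n}" for n
  proof (induction n)
    case 0 then show ?case by (simp add: st_def)
  next
    case (Suc n) then show ?case by (simp add: stS lessThan_Suc)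
  qed
  have pa: "aa n \<in> A \<and> aa n \<notin> aa ` {..<n} \<and> aa n \<notin> bb ` {..<n}" for n
  proof -
    have "infinite (A - (aa ` {..<n} \<union> bb ` {..<n}))" using infA by (simp add: Diff_infinite_finite)
    then obtain a where "a \<in> A - (aa ` {..<n} \<union> bb ` {..<n})" by (metis ex_in_conv finite.emptyI)
    then have "\<exists>a. a \<in> A \<and> a \<notin> set (fst (st n)) \<and> a \<notin> set (snd (st n))" using sets[of n] by blast
    from someI_ex[OF this] have "aa n \<in> A \<and> aa n \<notin> set (fst (st n)) \<and> aa n \<notin> set (snd (st n))"
      unfolding aa_def .
    then show ?thesis using sets[of n] by simp
  qed
  have pb: "bb n \<in> CN V E (aa ` {..n}) \<and> bb n \<notin> aa ` {..n} \<and> bb n \<notin> bb ` {..<n}" for n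
  proof -
    have eq: "insert (aa n) (set (fst (st n))) = aa ` {..n}" using sets[of n] by (auto simp: lessThan_Suc_atMost[symmetric] lessThan_Suc)
    have "infinite (CN V E (aa ` {..n}))" using good[of "aa ` {..n}"] pa by blast
    then have "infinite (CN V E (aa ` {..n}) - (aa ` {..n} \<union> bb ` {..<n}))" by (simp add: Diff_infinite_finite)
    then obtain b where "b \<in> CN V E (aa ` {..n}) - (aa ` {..n} \<union> bb ` {..<n})" by (metis ex_in_conv finite.emptyI)
    then have "\<exists>b. b \<in> CN V E (insert (aa n) (set (fst (st n)))) \<and> b \<notin> insert (aa n) (set (fst (st n))) \<and> b \<notin> set (snd (st n))"
      using sets[of n] eq by auto
    from someI_ex[OF this] have "bb n \<in> CN V E (insert (aa n) (set (fst (st n)))) \<and> bb n \<notin> insert (aa n) (set (fst (st n))) \<and> bb n \<notin> set (snd (st n))"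
      unfolding bb_def .
    then show ?thesis using eq sets[of n] by (metis insert_iff)
  qed
  define f where "f = (\<lambda>(k::nat, t::bool). if t then bb k else aa k)"
  have "inj f"
  proof (rule injI)
    fix x y assume fxy: "f x = f y"
    obtain i s j t where xy: "x = (i, s)" "y = (j, t)" by fastforce
    show "x = y"
    proof (cases s; cases t)
      assume "s" "t"
      then have "bb i = bb j" using fxy xy by (simp add: f_def)
      have "i = j"
      proof (rule ccontr)
        assume "i \<noteq> j" then consider "i < j" | "j < i" by linarith
        then show False using \<open>bb i = bb j\<close> pb[of i] pb[of j] by cases (metis imageI lessThan_iff)+
      qed
      then show ?thesis using xy \<open>s\<close> \<open>t\<close> by simp
    next
      assume "\<not> s" "\<not> t"
      then have "aa i = aa j" using fxy xy by (simp add: f_def)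
      have "i = j"
      proof (rule ccontr)
        assume "i \<noteq> j" then consider "i < j" | "j < i" by linarith
        then show False using \<open>aa i = aa j\<close> pa[of i] pa[of j] by cases (metis imageI lessThan_iff)+
      qed
      then show ?thesis using xy \<open>\<not>s\<close> \<open>\<not>t\<close> by simp
    next
      assume "s" "\<not> t"
      then have "bb i = aa j" using fxy xy by (simp add: f_def)
      then have False using pb[of i] pa[of j] by (cases "j \<le> i") (metis atMost_iff imageI, metis imageI lessThan_iff not_le)
      then show ?thesis ..
    next
      assume "\<not> s" "t"
      then have "aa i = bb j" using fxy xy by (simp add: f_def)
      then have False using pb[of j] pa[of i] by (cases "i \<le> j") (metis atMost_iff imageI, metis imageI lessThan_iff not_le)
      then show ?thesis ..
    qed
  qed
  moreover have "range f \<subseteq> V"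
  proof (rule subsetI)
    fix z assume "z \<in> range f"
    then obtain k t where "z = f (k, t)" by auto
    then show "z \<in> V" using pa[of k] pb[of k] AV unfolding f_def CN_def by (cases t) auto
  qed
  moreover have "\<forall>(x, y) \<in> H_right. (f x, f y) \<in> E"
    using pb unfolding H_right_def f_def CN_def by auto
  ultimately show ?thesis unfolding embeds_def by blast
qed




lemma fin_le_inf:
  assumes "finite A" "infinite B" shows "|A| \<le>o |B|"
proof -
  have "|A| \<le>o |UNIV::nat set|" using assms(1) countable_card_of_nat countable_finite by blast
  moreover have "|UNIV::nat set| \<le>o |B|" using assms(2) infinite_iff_card_of_nat by blast
  ultimately show ?thesis using ordLeq_transitive by blast
qed

lemma ordLeq_trans3:
  assumes "r1 \<le>o r2" "r2 \<le>o r3" "r3 \<le>o r4" shows "r1 \<le>o r4"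
  by (rule ordLeq_transitive[OF ordLeq_transitive[OF assms(1,2)] assms(3)])

lemma lists_bound:
  assumes B: "infinite B" and AB: "|A| \<le>o |B|"
  shows "|lists A| \<le>o |B|"
proof -
  define L where "L = (\<lambda>n. {xs \<in> lists A. length xs = n})"
  have Ln: "|L n| \<le>o |B|" for n
  proof (induction n)
    case 0
    have "L 0 = {[]}" by (auto simp: L_def)
    then show ?case using fin_le_inf[of "{[]}" B] B by simp
  next
    case (Suc n)
    have "L (Suc n) \<subseteq> (\<lambda>(a, xs). a # xs) ` (A \<times> L n)"
    proof
      fix ys assume "ys \<in> L (Suc n)"
      then obtain a xs where "ys = a # xs" "a \<in> A" "xs \<in> L n" unfolding L_def by (cases ys) auto
      then show "ys \<in> (\<lambda>(a, xs). a # xs) ` (A \<times> L n)" by force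
    qed
    then have "|L (Suc n)| \<le>o |(\<lambda>(a, xs). a # xs) ` (A \<times> L n)|" by (rule card_of_mono1)
    moreover have "|(\<lambda>(a, xs). a # xs) ` (A \<times> L n)| \<le>o |A \<times> L n|" by (rule card_of_image)
    moreover have "|A \<times> L n| \<le>o |B|"
      by (rule card_of_Times_ordLeq_infinite_Field) (use B AB Suc card_of_Card_order[of B] in \<open>simp_all add: Field_card_of\<close>)
    ultimately show ?case by (rule ordLeq_trans3)
  qed
  have "lists A = (\<Union>n. L n)" unfolding L_def by auto
  moreover have "|\<Union>n. L n| \<le>o |B|"
    using card_of_UNION_ordLeq_infinite[OF B, of "UNIV::nat set" L] Ln infinite_iff_card_of_nat B by blast
  ultimately show ?thesis by simp
qed

lemma finsub_bound:
  assumes B: "infinite B" and AB: "|A| \<le>o |B|"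
  shows "|{F. F \<subseteq> A \<and> finite F}| \<le>o |B|"
proof -
  have "{F. F \<subseteq> A \<and> finite F} \<subseteq> set ` lists A"
  proof
    fix F assume "F \<in> {F. F \<subseteq> A \<and> finite F}"
    then obtain xs where "set xs = F" "F \<subseteq> A" using finite_list by blast
    then show "F \<in> set ` lists A" by auto
  qed
  then have "|{F. F \<subseteq> A \<and> finite F}| \<le>o |set ` lists A|" by (rule card_of_mono1)
  moreover have "|set ` lists A| \<le>o |lists A|" by (rule card_of_image)
  ultimately show ?thesis using lists_bound[OF assms] by (rule ordLeq_trans3)
qed




lemma chain_fin_sub:
  assumes ch: "\<forall>X\<in>K. \<forall>Y\<in>K. X \<subseteq> Y \<or> Y \<subseteq> X"
    and "finite F" "F \<noteq> {}" "F \<subseteq> \<Union>K"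
  shows "\<exists>X\<in>K. F \<subseteq> X"
  using assms(2-4)
proof (induction F rule: finite_ne_induct)
  case (singleton x) then show ?case by blast
next
  case (insert x F)
  then obtain X where X: "X \<in> K" "F \<subseteq> X" by blast
  from insert obtain Y where Y: "Y \<in> K" "x \<in> Y" by blast
  show ?case
  proof (cases "X \<subseteq> Y")
    case True then show ?thesis using X Y by blast
  next
    case False then have "Y \<subseteq> X" using ch X Y by blast
    then show ?thesis using X Y by blast
  qed
qed

locale col =
  fixes V :: "'a set" and E :: "('a \<times> 'a) set"
  assumes noloop: "\<And>x. (x, x) \<notin> E"
    and hyp: "\<And>A. A \<subseteq> V \<Longrightarrow> infinite A \<Longrightarrow> \<exists>F\<subseteq>A. finite F \<and> F \<noteq> {} \<and> finite (CN V E F)"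
begin

definition tight :: "'a set \<Rightarrow> bool" where
  "tight F \<longleftrightarrow> finite F \<and> F \<noteq> {} \<and> finite (CN V E F)"

definition stp :: "'a set \<Rightarrow> 'a set \<Rightarrow> 'a set" where
  "stp W Y = Y \<union> (\<Union>F\<in>{F. F \<subseteq> Y \<and> tight F}. CN V E F \<inter> W)"

definition cl :: "'a set \<Rightarrow> 'a set \<Rightarrow> 'a set" where
  "cl W Y = (\<Union>n. (stp W ^^ n) Y)"

lemma stp_mono: "Y \<subseteq> Y' \<Longrightarrow> stp W Y \<subseteq> stp W Y'"
  unfolding stp_def by blast

lemma iter_mono: "Y \<subseteq> Y' \<Longrightarrow> (stp W ^^ n) Y \<subseteq> (stp W ^^ n) Y'"
  by (induction n) (auto dest: stp_mono[of _ _ W])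

lemma iter_le: "n \<le> m \<Longrightarrow> (stp W ^^ n) Y \<subseteq> (stp W ^^ m) Y"
proof (induction m)
  case 0 then show ?case by simp
next
  case (Suc m)
  show ?case
  proof (cases "n = Suc m")
    case False
    then have "(stp W ^^ n) Y \<subseteq> (stp W ^^ m) Y" using Suc by simp
    also have "\<dots> \<subseteq> (stp W ^^ Suc m) Y" by (simp add: stp_def)
    finally show ?thesis .
  qed simp
qed

lemma cl_incl: "Y \<subseteq> cl W Y"
proof -
  have "(stp W ^^ 0) Y \<subseteq> cl W Y" unfolding cl_def by blast
  then show ?thesis by simp
qed

lemma cl_mono: "Y \<subseteq> Y' \<Longrightarrow> cl W Y \<subseteq> cl W Y'"
  unfolding cl_def by (intro UN_mono iter_mono) auto

lemma iter_sub: "Y \<subseteq> W \<Longrightarrow> (stp W ^^ n) Y \<subseteq> W"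
  by (induction n) (auto simp: stp_def)

lemma cl_sub: "Y \<subseteq> W \<Longrightarrow> cl W Y \<subseteq> W"
  unfolding cl_def by (intro UN_least iter_sub)

lemma fin_in_iter:
  assumes "finite F" "F \<subseteq> cl W Y"
  shows "\<exists>n. F \<subseteq> (stp W ^^ n) Y"
  using assms
proof (induction F rule: finite_induct)
  case empty then show ?case by blast
next
  case (insert x F)
  then obtain n where n: "F \<subseteq> (stp W ^^ n) Y" by blast
  from insert obtain m where m: "x \<in> (stp W ^^ m) Y" unfolding cl_def by blast
  have "F \<subseteq> (stp W ^^ (max n m)) Y" using n iter_le[of n "max n m"] by auto
  moreover have "x \<in> (stp W ^^ (max n m)) Y" using m iter_le[of m "max n m"] by auto
  ultimately show ?case by blast
qed

lemma cl_closed: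
  assumes "F \<subseteq> cl W Y" "tight F"
  shows "CN V E F \<inter> W \<subseteq> cl W Y"
proof -
  have "finite F" using assms(2) unfolding tight_def by blast
  then obtain n where n: "F \<subseteq> (stp W ^^ n) Y" using fin_in_iter[OF _ assms(1)] by blast
  then have "CN V E F \<inter> W \<subseteq> (stp W ^^ Suc n) Y" using assms(2) by (auto simp: stp_def)
  then show ?thesis unfolding cl_def by blast
qed

lemma iter_empty: "(stp W ^^ n) {} = {}"
  by (induction n) (auto simp: stp_def tight_def)

lemma iter_chain:
  assumes ch: "\<forall>X\<in>C. \<forall>Y\<in>C. X \<subseteq> Y \<or> Y \<subseteq> X"
  shows "(stp W ^^ n) (\<Union>C) \<subseteq> (\<Union>X\<in>C. (stp W ^^ n) X)"
proof (induction n)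
  case 0 then show ?case by simp
next
  case (Suc n)
  show ?case
  proof
    fix z assume z: "z \<in> (stp W ^^ Suc n) (\<Union>C)"
    let ?Z = "(stp W ^^ n) (\<Union>C)"
    have "z \<in> stp W ?Z" using z by simp
    then consider "z \<in> ?Z" | F where "F \<subseteq> ?Z" "tight F" "z \<in> CN V E F \<inter> W"
      unfolding stp_def by blast
    then show "z \<in> (\<Union>X\<in>C. (stp W ^^ Suc n) X)"
    proof cases
      case 1
      then obtain X where "X \<in> C" "z \<in> (stp W ^^ n) X" using Suc by blast
      then show ?thesis using iter_le[where n=n and m="Suc n" and W=W and Y=X] by auto
    next
      case 2
      let ?K = "(\<lambda>X. (stp W ^^ n) X) ` C"
      have chK: "\<forall>X\<in>?K. \<forall>Y\<in>?K. X \<subseteq> Y \<or> Y \<subseteq> X"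
      proof (intro ballI)
        fix X' Y' assume "X' \<in> ?K" "Y' \<in> ?K"
        then obtain X Y where "X \<in> C" "Y \<in> C" "X' = (stp W ^^ n) X" "Y' = (stp W ^^ n) Y" by blast
        moreover have "X \<subseteq> Y \<or> Y \<subseteq> X" using ch \<open>X \<in> C\<close> \<open>Y \<in> C\<close> by blast
        ultimately show "X' \<subseteq> Y' \<or> Y' \<subseteq> X'" using iter_mono[where Y=X and Y'=Y and W=W and n=n] iter_mono[where Y=Y and Y'=X and W=W and n=n] by blast
      qed
      have "F \<subseteq> \<Union>?K" using 2 Suc by auto
      moreover have "finite F" "F \<noteq> {}" using 2 unfolding tight_def by auto
      ultimately obtain X' where "X' \<in> ?K" "F \<subseteq> X'" using chain_fin_sub[OF chK] by meson
      then obtain X where X: "X \<in> C" "F \<subseteq> (stp W ^^ n) X" by blast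
      then have "z \<in> stp W ((stp W ^^ n) X)" using 2 unfolding stp_def by blast
      then show ?thesis using X by auto
    qed
  qed
qed

lemma cl_chain:
  assumes ch: "\<forall>X\<in>C. \<forall>Y\<in>C. X \<subseteq> Y \<or> Y \<subseteq> X"
  shows "cl W (\<Union>C) = (\<Union>X\<in>C. cl W X)"
proof
  show "cl W (\<Union>C) \<subseteq> (\<Union>X\<in>C. cl W X)" unfolding cl_def using iter_chain[OF ch] by blast
  show "(\<Union>X\<in>C. cl W X) \<subseteq> cl W (\<Union>C)" by (intro UN_least cl_mono Union_upper)
qed

lemma closed_fin_in:
  assumes cls: "\<And>F. F \<subseteq> M \<Longrightarrow> tight F \<Longrightarrow> CN V E F \<inter> W \<subseteq> M"
    and MV: "M \<subseteq> V" and w: "w \<in> W" "w \<in> V" "w \<notin> M"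
  shows "finite {u \<in> M. (u, w) \<in> E}"
proof (rule ccontr)
  assume inf: "infinite {u \<in> M. (u, w) \<in> E}"
  obtain F where F: "F \<subseteq> {u \<in> M. (u, w) \<in> E}" "finite F" "F \<noteq> {}" "finite (CN V E F)"
    using hyp[OF _ inf] MV by blast
  then have "w \<in> CN V E F \<inter> W" using w unfolding CN_def by auto
  moreover have "tight F" using F unfolding tight_def by blast
  then have "CN V E F \<inter> W \<subseteq> M" using cls[of F] F(1) by blast
  ultimately show False using w by blast
qed

lemma iter_bound:
  assumes B: "infinite B" and YB: "|Y| \<le>o |B|"
  shows "|(stp W ^^ n) Y| \<le>o |B|"
proof (induction n)
  case 0 then show ?case using YB by simp
next
  case (Suc n)
  let ?Z = "(stp W ^^ n) Y"
  let ?T = "{F. F \<subseteq> ?Z \<and> tight F}"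
  have "?T \<subseteq> {F. F \<subseteq> ?Z \<and> finite F}" unfolding tight_def by blast
  then have T: "|?T| \<le>o |B|" by (rule ordLeq_transitive[OF card_of_mono1 finsub_bound[OF B Suc]])
  have "\<forall>F\<in>?T. |CN V E F \<inter> W| \<le>o |B|"
  proof
    fix F assume "F \<in> ?T"
    then have "finite (CN V E F \<inter> W)" unfolding tight_def by blast
    then show "|CN V E F \<inter> W| \<le>o |B|" by (rule fin_le_inf[OF _ B])
  qed
  then have U: "|\<Union>F\<in>?T. CN V E F \<inter> W| \<le>o |B|" by (rule card_of_UNION_ordLeq_infinite[OF B T])
  have "|?Z \<union> (\<Union>F\<in>?T. CN V E F \<inter> W)| \<le>o |B|"
    by (rule card_of_Un_ordLeq_infinite_Field[where r="|B|", simplified Field_card_of])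
      (use B Suc U card_of_card_order_on in auto)
  moreover have "(stp W ^^ Suc n) Y = ?Z \<union> (\<Union>F\<in>?T. CN V E F \<inter> W)"
    unfolding funpow.simps comp_apply stp_def ..
  ultimately show ?case by simp
qed

lemma cl_bound:
  assumes B: "infinite B" and YB: "|Y| \<le>o |B|"
  shows "|cl W Y| \<le>o |B|"
  unfolding cl_def
  by (rule card_of_UNION_ordLeq_infinite[OF B])
    (use iter_bound[OF assms] infinite_iff_card_of_nat B in auto)

end



context col
begin

definition colourable :: "'a set \<Rightarrow> bool" where
  "colourable W \<longleftrightarrow> (\<exists>c::'a \<Rightarrow> nat. \<forall>n. acyclic (E \<inter> ({x \<in> W. c x = n} \<times> {x \<in> W. c x = n})))"

lemma countable_colourable:
  assumes "countable W" shows "colourable W"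
  unfolding colourable_def
proof (intro exI allI)
  fix n
  let ?X = "{x \<in> W. to_nat_on W x = n}"
  have "E \<inter> (?X \<times> ?X) = {}"
  proof (rule equals0I)
    fix p assume p: "p \<in> E \<inter> (?X \<times> ?X)"
    then obtain a b where ab: "p = (a, b)" "a \<in> W" "b \<in> W" "to_nat_on W a = n" "to_nat_on W b = n" by blast
    then have "a = b" using inj_on_to_nat_on[OF assms] by (metis inj_onD)
    then show False using p ab noloop by blast
  qed
  then show "acyclic (E \<inter> (?X \<times> ?X))" by (simp add: acyclic_def)
qed

definition Sof :: "('a \<times> nat option) set \<Rightarrow> 'a set" where
  "Sof P = {s. (s, None) \<in> P}"
definition Clr :: "('a \<times> nat option) set \<Rightarrow> nat \<Rightarrow> 'a set" where
  "Clr P n = {x. (x, Some n) \<in> P}"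
definition Dom :: "('a \<times> nat option) set \<Rightarrow> 'a set" where
  "Dom P = {x. \<exists>n. (x, Some n) \<in> P}"
definition sv :: "('a \<times> nat option) set \<Rightarrow> bool" where
  "sv P \<longleftrightarrow> (\<forall>x m n. (x, Some m) \<in> P \<longrightarrow> (x, Some n) \<in> P \<longrightarrow> m = n)"

lemma sv_the:
  assumes "sv P" "x \<in> Dom P"
  shows "(x, Some (THE n. (x, Some n) \<in> P)) \<in> P"
proof -
  obtain m where m: "(x, Some m) \<in> P" using assms(2) unfolding Dom_def by blast
  have "(THE n. (x, Some n) \<in> P) = m"
    by (rule the_equality) (use m assms(1) in \<open>auto simp: sv_def\<close>)
  then show ?thesis using m by simp
qed


lemma card_small:
  assumes WV: "W \<subseteq> V" and unc: "\<not> countable W" and x: "x \<in> W"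
    and S'sub: "S' \<subseteq> underS |W| x \<union> {x}"
  shows "|cl W S'| <o |W|"
proof -
  have infW: "infinite W" using unc countable_finite by blast
  have natW: "|UNIV::nat set| <o |W|"
  proof -
    have "\<not> |W| \<le>o |UNIV::nat set|" using unc countable_card_of_nat by blast
    then show ?thesis using not_ordLeq_iff_ordLess[OF card_of_Well_order card_of_Well_order] by blast
  qed
  let ?Y = "underS |W| x \<union> {x}"
  have "|underS |W| x| <o |W|" using card_of_underS[OF card_of_Card_order, of x W] x
    by (simp add: Field_card_of)
  moreover have "|{x}| <o |W|"
    by (rule ordLeq_ordLess_trans[OF fin_le_inf natW]) simp_all
  ultimately have Y: "|?Y| <o |W|" by (rule card_of_Un_ordLess_infinite[OF infW])
  have "|cl W ?Y| <o |W|"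
  proof (cases "finite ?Y")
    case True
    have "|cl W ?Y| \<le>o |UNIV::nat set|" by (rule cl_bound) (use True fin_le_inf[of ?Y "UNIV::nat set"] in auto)
    then show ?thesis using natW by (rule ordLeq_ordLess_trans)
  next
    case False
    have "|cl W ?Y| \<le>o |?Y|" by (rule cl_bound) (use False ordLeq_refl[OF card_of_Card_order] in auto)
    then show ?thesis using Y by (rule ordLeq_ordLess_trans)
  qed
  moreover have "|cl W S'| \<le>o |cl W ?Y|" by (rule card_of_mono1[OF cl_mono[OF S'sub]])
  ultimately show ?thesis by (rule ordLeq_ordLess_trans[rotated])
qed


lemma step_colourable:
  assumes WV: "W \<subseteq> V" and unc: "\<not> countable W"
    and IH: "\<And>W'. |W'| <o |W| \<Longrightarrow> W' \<subseteq> V \<Longrightarrow> colourable W'"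
  shows "colourable W"
proof -
  define r where "r = |W|"
  have wo: "Well_order r" unfolding r_def by (rule card_of_Well_order)
  have fr: "Field r = W" unfolding r_def by (rule Field_card_of)
  define good where "good P \<longleftrightarrow> Sof P \<subseteq> W \<and> (\<forall>s\<in>Sof P. \<forall>z. (z, s) \<in> r \<longrightarrow> z \<in> Sof P) \<and> sv P
      \<and> Dom P = cl W (Sof P) \<and> (\<forall>n. acyclic (E \<inter> (Clr P n \<times> Clr P n)))" for P
  define AA where "AA = {P. good P}"
  have "\<forall>C\<in>chains AA. \<Union>C \<in> AA"
  proof
    fix C assume C: "C \<in> chains AA"
    then have CA: "\<And>P. P \<in> C \<Longrightarrow> good P" and ch: "\<forall>X\<in>C. \<forall>Y\<in>C. X \<subseteq> Y \<or> Y \<subseteq> X"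
      unfolding chains_def chain_subset_def AA_def by auto
    have SU: "Sof (\<Union>C) = (\<Union>P\<in>C. Sof P)" unfolding Sof_def by auto
    have DU: "Dom (\<Union>C) = (\<Union>P\<in>C. Dom P)" unfolding Dom_def by auto
    have CU: "Clr (\<Union>C) n = (\<Union>P\<in>C. Clr P n)" for n unfolding Clr_def by auto
    have chS: "\<forall>X\<in>Sof ` C. \<forall>Y\<in>Sof ` C. X \<subseteq> Y \<or> Y \<subseteq> X"
    proof (intro ballI)
      fix X Y assume "X \<in> Sof ` C" "Y \<in> Sof ` C"
      then obtain P Q where "P \<in> C" "Q \<in> C" "X = Sof P" "Y = Sof Q" by blast
      moreover have "P \<subseteq> Q \<or> Q \<subseteq> P" using ch \<open>P \<in> C\<close> \<open>Q \<in> C\<close> by blast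
      ultimately show "X \<subseteq> Y \<or> Y \<subseteq> X" unfolding Sof_def by blast
    qed
    have chC: "\<forall>X\<in>(\<lambda>P. Clr P n) ` C. \<forall>Y\<in>(\<lambda>P. Clr P n) ` C. X \<subseteq> Y \<or> Y \<subseteq> X" for n
    proof (intro ballI)
      fix X Y assume "X \<in> (\<lambda>P. Clr P n) ` C" "Y \<in> (\<lambda>P. Clr P n) ` C"
      then obtain P Q where "P \<in> C" "Q \<in> C" "X = Clr P n" "Y = Clr Q n" by blast
      moreover have "P \<subseteq> Q \<or> Q \<subseteq> P" using ch \<open>P \<in> C\<close> \<open>Q \<in> C\<close> by blast
      ultimately show "X \<subseteq> Y \<or> Y \<subseteq> X" unfolding Clr_def by blast
    qed
    have g1: "Sof (\<Union>C) \<subseteq> W" using CA unfolding SU good_def by blast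
    have g2: "\<forall>s\<in>Sof (\<Union>C). \<forall>z. (z, s) \<in> r \<longrightarrow> z \<in> Sof (\<Union>C)"
    proof (intro ballI allI impI)
      fix s z assume "s \<in> Sof (\<Union>C)" "(z, s) \<in> r"
      then obtain P where "P \<in> C" "s \<in> Sof P" unfolding SU by blast
      then have "z \<in> Sof P" using CA[of P] \<open>(z, s) \<in> r\<close> unfolding good_def by blast
      then show "z \<in> Sof (\<Union>C)" using \<open>P \<in> C\<close> unfolding SU by blast
    qed
    have g3: "sv (\<Union>C)" unfolding sv_def
    proof (intro allI impI)
      fix x m n assume "(x, Some m) \<in> \<Union>C" "(x, Some n) \<in> \<Union>C"
      then obtain P Q where PQ: "P \<in> C" "Q \<in> C" "(x, Some m) \<in> P" "(x, Some n) \<in> Q" by blast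
      have "P \<subseteq> Q \<or> Q \<subseteq> P" using ch PQ by blast
      then show "m = n"
      proof
        assume "P \<subseteq> Q" then show ?thesis using CA[of Q] PQ unfolding good_def sv_def by blast
      next
        assume "Q \<subseteq> P" then show ?thesis using CA[of P] PQ unfolding good_def sv_def by blast
      qed
    qed
    have "Dom (\<Union>C) = (\<Union>P\<in>C. cl W (Sof P))" unfolding DU using CA unfolding good_def by auto
    also have "\<dots> = (\<Union>X\<in>Sof ` C. cl W X)" by blast
    also have "\<dots> = cl W (\<Union>(Sof ` C))" using cl_chain[OF chS, of W] by simp
    also have "\<dots> = cl W (Sof (\<Union>C))" unfolding SU by simp
    finally have g4: "Dom (\<Union>C) = cl W (Sof (\<Union>C))" .
    have g5: "acyclic (E \<inter> (Clr (\<Union>C) n \<times> Clr (\<Union>C) n))" for n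
    proof -
      have "\<forall>X\<in>(\<lambda>P. Clr P n) ` C. acyclic (E \<inter> (X \<times> X))" using CA unfolding good_def by blast
      then have "acyclic (E \<inter> (\<Union>((\<lambda>P. Clr P n) ` C) \<times> \<Union>((\<lambda>P. Clr P n) ` C)))"
        by (rule acyclic_chain_union[OF chC])
      then show ?thesis unfolding CU by simp
    qed
    show "\<Union>C \<in> AA" unfolding AA_def good_def using g1 g2 g3 g4 g5 by blast
  qed
  then obtain P where PA: "P \<in> AA" and Pmax: "\<forall>X\<in>AA. P \<subseteq> X \<longrightarrow> X = P"
    using Zorn_Lemma by blast
  have gP: "good P" using PA unfolding AA_def by blast
  have SW: "Sof P = W"
  proof (rule ccontr)
    assume ne: "Sof P \<noteq> W"
    define S where "S = Sof P"
    have SsubW: "S \<subseteq> W" and Sinit: "\<And>s z. s \<in> S \<Longrightarrow> (z, s) \<in> r \<Longrightarrow> z \<in> S"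
      and svP: "sv P" and DomP: "Dom P = cl W S" and acP: "\<And>n. acyclic (E \<inter> (Clr P n \<times> Clr P n))"
      using gP unfolding good_def S_def by blast+
    have lin: "Linear_order r" and wf: "wf (r - Id)" using wo unfolding well_order_on_def by blast+
    have "W - S \<subseteq> Field r" "W - S \<noteq> {}" using fr SsubW ne S_def by auto
    moreover have "\<forall>A \<subseteq> Field r. A \<noteq> {} \<longrightarrow> (\<exists>a\<in>A. \<forall>a'\<in>A. (a, a') \<in> r)"
      using Linear_order_wf_diff_Id[OF lin] wf by simp
    ultimately obtain x where x: "x \<in> W - S" and xmin: "\<forall>y\<in>W - S. (x, y) \<in> r"
      by meson
    have wor: "wo_rel r" using wo by (simp add: wo_rel_def)
    have tot: "\<forall>a\<in>Field r. \<forall>b\<in>Field r. (a, b) \<in> r \<or> (b, a) \<in> r" by (rule wo_rel.TOTALS[OF wor])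
    have anti: "antisym r" by (rule wo_rel.ANTISYM[OF wor])
    have Sunder: "S \<subseteq> underS r x"
    proof
      fix s assume s: "s \<in> S"
      have "(x, s) \<notin> r" using Sinit[OF s] x by blast
      then have "(s, x) \<in> r" using tot s SsubW x fr by blast
      moreover have "s \<noteq> x" using s x by blast
      ultimately show "s \<in> underS r x" unfolding underS_def by blast
    qed
    define S' where "S' = insert x S"
    have S'init: "z \<in> S'" if "s \<in> S'" "(z, s) \<in> r" for s z
    proof (cases "s \<in> S")
      case True then show ?thesis using Sinit that S'_def by blast
    next
      case False
      then have sx: "s = x" using that S'_def by blast
      have zW: "z \<in> W" using that(2) fr unfolding Field_def by blast
      show ?thesis
      proof (rule ccontr)
        assume "z \<notin> S'"
        then have "z \<in> W - S" "z \<noteq> x" using zW S'_def by auto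
        then have "(x, z) \<in> r" using xmin by blast
        then show False using that(2) sx anti \<open>z \<noteq> x\<close> unfolding antisym_def by blast
      qed
    qed
    have S'sub: "S' \<subseteq> underS |W| x \<union> {x}" using Sunder S'_def r_def by blast
    have S'W: "S' \<subseteq> W" using SsubW x S'_def by blast
    define N where "N = cl W S' - cl W S"
    have "|N| \<le>o |cl W S'|" unfolding N_def by (rule card_of_mono1) blast
    moreover have "|cl W S'| <o |W|" by (rule card_small[OF WV unc _ S'sub]) (use x in blast)
    ultimately have Nsmall: "|N| <o |W|" by (rule ordLeq_ordLess_trans)
    have NW: "N \<subseteq> W" using cl_sub[OF S'W] N_def by blast
    then have "colourable N" using IH[OF Nsmall] WV by blast
    then obtain cN :: "'a \<Rightarrow> nat" where cN: "\<And>n. acyclic (E \<inter> ({y \<in> N. cN y = n} \<times> {y \<in> N. cN y = n}))"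
      unfolding colourable_def by blast
    define col where "col = (\<lambda>u. THE n. (u, Some n) \<in> P)"
    have colP: "u \<in> Dom P \<Longrightarrow> (u, Some (col u)) \<in> P" for u unfolding col_def by (rule sv_the[OF svP])
    define K where "K = (\<lambda>y. col ` {u \<in> cl W S. (u, y) \<in> E})"
    have Kfin: "finite (K y)" if "y \<in> N" for y
    proof -
      have "finite {u \<in> cl W S. (u, y) \<in> E}"
      proof (rule closed_fin_in)
        show "\<And>F. F \<subseteq> cl W S \<Longrightarrow> tight F \<Longrightarrow> CN V E F \<inter> W \<subseteq> cl W S" by (rule cl_closed)
        show "cl W S \<subseteq> V" using cl_sub[OF SsubW] WV by blast
        show "y \<in> W" "y \<in> V" "y \<notin> cl W S" using that NW WV N_def by auto
      qed
      then show ?thesis unfolding K_def by simp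
    qed
    define g where "g = (\<lambda>y. prod_encode (cN y, Suc (Max (insert 0 (K y)))))"
    define P' where "P' = P \<union> {(x, None)} \<union> (\<lambda>y. (y, Some (g y))) ` N"
    have SP': "Sof P' = S'" unfolding P'_def Sof_def S'_def S_def by auto
    have DP': "Dom P' = Dom P \<union> N" unfolding P'_def Dom_def by auto
    have DN: "Dom P \<inter> N = {}" using DomP N_def by blast
    have sv': "sv P'" unfolding sv_def
    proof (intro allI impI)
      fix z m n assume zm: "(z, Some m) \<in> P'" and zn: "(z, Some n) \<in> P'"
      consider "(z, Some m) \<in> P" "(z, Some n) \<in> P" | "(z, Some m) \<in> P" "z \<in> N" | "z \<in> N" "(z, Some n) \<in> P"
        | "m = g z" "n = g z" using zm zn unfolding P'_def by blast
      then show "m = n"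
      proof cases
        case 1 then show ?thesis using svP unfolding sv_def by blast
      next
        case 2 then show ?thesis using DN unfolding Dom_def by blast
      next
        case 3 then show ?thesis using DN unfolding Dom_def by blast
      qed simp
    qed
    have "cl W S \<subseteq> cl W S'" by (rule cl_mono) (use S'_def in blast)
    then have dom': "Dom P' = cl W (Sof P')" unfolding DP' SP' DomP N_def by blast
    have ac': "acyclic (E \<inter> (Clr P' n \<times> Clr P' n))" for n
    proof -
      define B where "B = {y \<in> N. g y = n}"
      have CP': "Clr P' n = Clr P n \<union> B" unfolding P'_def Clr_def B_def by auto
      have "B \<subseteq> {y \<in> N. cN y = fst (prod_decode n)}"
        unfolding B_def g_def by (auto simp: prod_encode_inverse)
      then have "E \<inter> (B \<times> B) \<subseteq> E \<inter> ({y \<in> N. cN y = fst (prod_decode n)} \<times> {y \<in> N. cN y = fst (prod_decode n)})"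
        by blast
      then have acB: "acyclic (E \<inter> (B \<times> B))" by (rule acyclic_subset[OF cN])
      have no: "(u, y) \<notin> E" if "u \<in> Clr P n" "y \<in> B" for u y
      proof
        assume uy: "(u, y) \<in> E"
        have uD: "u \<in> Dom P" using that(1) unfolding Clr_def Dom_def by blast
        then have "col u = n" using colP[OF uD] that(1) svP unfolding Clr_def sv_def by blast
        moreover have "u \<in> cl W S" using uD DomP by blast
        ultimately have "n \<in> K y" using uy unfolding K_def by blast
        then have "n \<le> Max (insert 0 (K y))" using Kfin that(2) B_def by simp
        also have "\<dots> < Suc (Max (insert 0 (K y)))" by simp
        also have "\<dots> \<le> g y" unfolding g_def by (rule le_prod_encode_2)
        finally show False using that(2) unfolding B_def by simp
      qed
      show ?thesis unfolding CP' by (rule acyclic_join[OF acP acB no])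
    qed
    have "good P'" unfolding good_def
    proof (intro conjI)
      show "Sof P' \<subseteq> W" using SP' S'W by simp
      show "\<forall>s\<in>Sof P'. \<forall>z. (z, s) \<in> r \<longrightarrow> z \<in> Sof P'" unfolding SP' using S'init by blast
      show "sv P'" by (rule sv')
      show "Dom P' = cl W (Sof P')" by (rule dom')
      show "\<forall>n. acyclic (E \<inter> (Clr P' n \<times> Clr P' n))" using ac' by blast
    qed
    then have "P' \<in> AA" unfolding AA_def by simp
    moreover have "P \<subseteq> P'" unfolding P'_def by blast
    ultimately have "P' = P" using Pmax by blast
    moreover have "(x, None) \<in> P' - P" using x unfolding P'_def S_def Sof_def by simp
    ultimately show False by blast
  qed
  define c where "c = (\<lambda>u. THE n. (u, Some n) \<in> P)"
  have "Dom P = cl W W" using gP SW unfolding good_def by simp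
  then have WD: "W \<subseteq> Dom P" using cl_incl[of W W] by simp
  have svP: "sv P" using gP unfolding good_def by blast
  have inC: "u \<in> Clr P (c u)" if "u \<in> W" for u
  proof -
    have "(u, Some (c u)) \<in> P" unfolding c_def by (rule sv_the[OF svP]) (use that WD in blast)
    then show ?thesis unfolding Clr_def by simp
  qed
  show ?thesis unfolding colourable_def
  proof (intro exI allI)
    fix n
    have "{x \<in> W. c x = n} \<subseteq> Clr P n"
    proof
      fix x assume "x \<in> {x \<in> W. c x = n}"
      then show "x \<in> Clr P n" using inC[of x] by simp
    qed
    then have "E \<inter> ({x \<in> W. c x = n} \<times> {x \<in> W. c x = n}) \<subseteq> E \<inter> (Clr P n \<times> Clr P n)"
      by blast
    moreover have "acyclic (E \<inter> (Clr P n \<times> Clr P n))" using gP unfolding good_def by blast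
    ultimately show "acyclic (E \<inter> ({x \<in> W. c x = n} \<times> {x \<in> W. c x = n}))"
      by (rule acyclic_subset[rotated])
  qed
qed


lemma colour_all: "W \<subseteq> V \<Longrightarrow> colourable W"
proof (induction W rule: wf_induct_rule[OF wf_inv_image[OF wf_ordLess, where f=card_of]])
  case (1 W)
  show ?case
  proof (cases "countable W")
    case True then show ?thesis by (rule countable_colourable)
  next
    case False
    show ?thesis by (rule step_colourable[OF 1(2) False]) (use 1(1) in \<open>auto simp: inv_image_def\<close>)
  qed
qed

end

lemma right_embeds:
  assumes dg: "digraph V E" and nd: "\<not> dichromatic_le_omega V E"
  shows "embeds H_right V E"
proof (rule ccontr)
  assume ne: "\<not> embeds H_right V E"
  have noloop: "(x, x) \<notin> E" for x using dg unfolding digraph_def by blast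
  have hyp: "\<exists>F\<subseteq>A. finite F \<and> F \<noteq> {} \<and> finite (CN V E F)" if "A \<subseteq> V" "infinite A" for A
  proof (rule ccontr)
    assume "\<not> (\<exists>F\<subseteq>A. finite F \<and> F \<noteq> {} \<and> finite (CN V E F))"
    then have "\<And>F. F \<subseteq> A \<Longrightarrow> finite F \<Longrightarrow> F \<noteq> {} \<Longrightarrow> infinite (CN V E F)" by blast
    then have "embeds H_right V E" by (rule embed_from_set[OF that])
    then show False using ne by blast
  qed
  interpret col V E by (unfold_locales) (use noloop hyp in blast)+
  have "colourable V" by (rule colour_all) simp
  then obtain c :: "'a \<Rightarrow> nat" where c: "\<And>n. acyclic (E \<inter> ({x \<in> V. c x = n} \<times> {x \<in> V. c x = n}))"
    unfolding colourable_def by blast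
  have "dichromatic_le_omega V E" unfolding dichromatic_le_omega_def
  proof (intro exI conjI)
    show "countable (range (\<lambda>n. {x \<in> V. c x = n}))" by simp
    show "\<forall>A\<in>range (\<lambda>n. {x \<in> V. c x = n}). A \<subseteq> V \<and> acyclic_set E A"
      using c unfolding acyclic_set_def by blast
    show "V \<subseteq> \<Union>(range (\<lambda>n. {x \<in> V. c x = n}))" by blast
  qed
  then show False using nd by blast
qed

theorem proposition3p4:
  fixes V :: "'a set" and E :: "('a \<times> 'a) set"
  assumes "digraph V E"
    and "\<not> dichromatic_le_omega V E"
  shows "embeds H_right V E \<and> embeds H_left V E"
proof
  show "embeds H_right V E" by (rule right_embeds[OF assms])
  have dg': "digraph V (E\<inverse>)" using assms(1) unfolding digraph_def by blast
  have eq: "E\<inverse> \<inter> (A \<times> A) = (E \<inter> (A \<times> A))\<inverse>" for A by blast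
  have "\<not> dichromatic_le_omega V (E\<inverse>)"
    using assms(2) unfolding dichromatic_le_omega_def acyclic_set_def eq acyclic_converse .
  then have "embeds H_right V (E\<inverse>)" by (rule right_embeds[OF dg'])
  then obtain f where f: "inj f" "range f \<subseteq> V" "\<forall>(x, y)\<in>H_right. (f x, f y) \<in> E\<inverse>"
    unfolding embeds_def by blast
  have "\<forall>(x, y)\<in>H_left. (f x, f y) \<in> E"
    using f(3) unfolding H_left_def H_right_def by auto
  then show "embeds H_left V E" unfolding embeds_def using f(1,2) by blast
qed


end
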